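(* Let $\sigma\colon\mathbb{H}^3\to\mathbb{H}^3$ be the cyclic shift $\sigma(a,b,c)=(b,c,a)$, and let $m\ge1$. Suppose $x_1,\dots,x_{3m}\in\mathbb{H}^3$ and $w_1,\dots,w_{3m}\in\mathbb{R}$ satisfy: (1) $x_{m+i}=\sigma(x_i)$ for $i=1,\dots,2m$; (2) $w_{m+i}=w_i$ for $i=1,\dots,2m$; (3) $|x_i|^2=1$ for $i=1,\dots,m$; (4) the squared inner products $|\langle x_i,x_j\rangle|^2$, taken over all $i\in\{1,\dots,m\}$ together with all $j$ in any of the following ranges, are all equal: (i) $j=i+m$; (ii) $i<j\le m$; (iii) $i+m<j\le 2m$; (iv) $i+2m<j\le 3m$; (5) the matrix $\sum_{i=1}^{3m}w_ix_ix_i^\dagger$ has $(1,1)$ entry equal to $1$ and $(1,2)$ entry equal to $0$. Then $w_1=\cdots=w_{3m}=1/m$ and $\{x_1,\dots,x_{3m}\}$ is a tight simplex in $\mathbb{H}\mathbb{P}^2$.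
   Context: $\mathbb{H}$ denotes the quaternions; $\dagger$ is conjugate transpose and $\langle x,y\rangle=x^\dagger y$ on $\mathbb{H}^3$. $\mathbb{H}\mathbb{P}^{2}$ is the space of quaternionic lines in $\mathbb{H}^3$ (scalars acting on the right), points represented by unit vectors. A tight simplex of $N$ points in $\mathbb{H}\mathbb{P}^{2}$ is a set of $N$ distinct points $x_1,\dots,x_N$ with $|\langle x_i,x_j\rangle|^2=\frac{N-3}{3(N-1)}$ for all $i\ne j$. *)

theory Defs
  imports "HOL-Analysis.Analysis"
begin

datatype quat = Quat (qr: real) (qi: real) (qj: real) (qk: real)

instantiation quat :: "{comm_monoid_add, times, one, uminus}"
begin
definition "0 = Quat 0 0 0 0"
definition "1 = Quat 1 0 0 0"
definition "p + q = Quat (qr p + qr q) (qi p + qi q) (qj p + qj q) (qk p + qk q)"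
definition "- p = Quat (- qr p) (- qi p) (- qj p) (- qk p)"
text \<open>Hamilton product, with i^2 = j^2 = k^2 = ijk = -1.\<close>
definition "p * q = Quat
   (qr p * qr q - qi p * qi q - qj p * qj q - qk p * qk q)
   (qr p * qi q + qi p * qr q + qj p * qk q - qk p * qj q)
   (qr p * qj q - qi p * qk q + qj p * qr q + qk p * qi q)
   (qr p * qk q + qi p * qj q - qj p * qi q + qk p * qr q)"
instance
  by standard (simp_all add: zero_quat_def plus_quat_def algebra_simps)
end

definition qconj :: "quat \<Rightarrow> quat" where
  "qconj p = Quat (qr p) (- qi p) (- qj p) (- qk p)"

definition qnormsq :: "quat \<Rightarrow> real" where
  "qnormsq p = (qr p)\<^sup>2 + (qi p)\<^sup>2 + (qj p)\<^sup>2 + (qk p)\<^sup>2"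

definition qscale :: "real \<Rightarrow> quat \<Rightarrow> quat" where
  "qscale c p = Quat (c * qr p) (c * qi p) (c * qj p) (c * qk p)"

type_synonym hvec = "quat ^ 3"

definition hinner :: "hvec \<Rightarrow> hvec \<Rightarrow> quat" where
  "hinner x y = (\<Sum>k\<in>UNIV. qconj (x $ k) * y $ k)"

definition hip2 :: "hvec \<Rightarrow> hvec \<Rightarrow> real" where
  "hip2 x y = qnormsq (hinner x y)"

definition hnormsq :: "hvec \<Rightarrow> real" where
  "hnormsq x = (\<Sum>k\<in>UNIV. qnormsq (x $ k))"

definition hshift :: "hvec \<Rightarrow> hvec" where
  "hshift x = (\<chi> k. if k = 1 then x $ 2 else if k = 2 then x $ 3 else x $ 1)"

text \<open>The quaternionic line through x (scalars acting on the right): the point of HP^2 represented by x.\<close>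
definition hline :: "hvec \<Rightarrow> hvec set" where
  "hline x = {(\<chi> k. x $ k * q) | q. True}"

definition outer_entry :: "hvec \<Rightarrow> 3 \<Rightarrow> 3 \<Rightarrow> quat" where
  "outer_entry x a b = x $ a * qconj (x $ b)"

definition tight_simplex :: "nat \<Rightarrow> (nat \<Rightarrow> hvec) \<Rightarrow> bool" where
  "tight_simplex N x \<longleftrightarrow>
     (\<forall>i\<in>{1..N}. hnormsq (x i) = 1) \<and>
     (\<forall>i\<in>{1..N}. \<forall>j\<in>{1..N}. i \<noteq> j \<longrightarrow> hline (x i) \<noteq> hline (x j)) \<and>
     (\<forall>i\<in>{1..N}. \<forall>j\<in>{1..N}. i \<noteq> j \<longrightarrow>
        hip2 (x i) (x j) = (real N - 3) / (3 * (real N - 1)))"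

end

theory Submission
  imports Defs
begin


instantiation quat :: minus
begin
definition "p - q = p + - (q::quat)"
instance ..
end

lemma quat_eqI: "qr p = qr q \<Longrightarrow> qi p = qi q \<Longrightarrow> qj p = qj q \<Longrightarrow> qk p = qk q \<Longrightarrow> p = q"
  by (cases p; cases q) auto

lemmas qdefs = zero_quat_def one_quat_def plus_quat_def uminus_quat_def times_quat_def minus_quat_def

instance quat :: ring_1
  by standard (auto intro!: quat_eqI simp: qdefs algebra_simps)

definition R :: "real \<Rightarrow> quat" where "R c = Quat c 0 0 0"

lemma qscale_R: "qscale c p = R c * p"
  by (rule quat_eqI) (simp_all add: qscale_def R_def qdefs)
lemma R_comm: "R c * p = p * R c"
  by (rule quat_eqI) (simp_all add: R_def qdefs)
lemma R_add: "R (a + b) = R a + R b" by (simp add: R_def qdefs)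
lemma R_mult: "R (a * b) = R a * R b" by (rule quat_eqI) (simp_all add: R_def qdefs)
lemma R_0: "R 0 = 0" by (simp add: R_def qdefs)
lemma R_1: "R 1 = 1" by (simp add: R_def qdefs)
lemma R_sum: "R (sum f A) = (\<Sum>a\<in>A. R (f a))"
  by (induction A rule: infinite_finite_induct) (simp_all add: R_0 R_add)
lemma R_inj: "R a = R b \<longleftrightarrow> a = b" by (simp add: R_def)
lemma qr_R: "qr (R a) = a" by (simp add: R_def)
lemma qr_add: "qr (p + q) = qr p + qr q" by (simp add: qdefs)
lemma qr_sum: "qr (sum f A) = (\<Sum>a\<in>A. qr (f a))"
  by (induction A rule: infinite_finite_induct) (simp_all add: qr_add qdefs)
lemma qr_Rmult: "qr (R c * p) = c * qr p" by (simp add: R_def qdefs)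

lemma qconj_mult: "qconj (p * q) = qconj q * qconj p"
  by (rule quat_eqI) (simp_all add: qconj_def qdefs algebra_simps)
lemma qconj_add: "qconj (p + q) = qconj p + qconj q"
  by (rule quat_eqI) (simp_all add: qconj_def qdefs algebra_simps)
lemma qconj_0: "qconj 0 = 0" by (simp add: qconj_def qdefs)
lemma qconj_sum: "qconj (sum f A) = (\<Sum>a\<in>A. qconj (f a))"
  by (induction A rule: infinite_finite_induct) (simp_all add: qconj_0 qconj_add)
lemma qconj_qconj: "qconj (qconj p) = p" by (simp add: qconj_def)
lemma qconj_R: "qconj (R c) = R c" by (simp add: qconj_def R_def)
lemma mult_qconj: "p * qconj p = R (qnormsq p)"
  by (rule quat_eqI) (simp_all add: qconj_def qdefs R_def qnormsq_def power2_eq_square algebra_simps)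
lemma qconj_mult_self: "qconj p * p = R (qnormsq p)"
  by (rule quat_eqI) (simp_all add: qconj_def qdefs R_def qnormsq_def power2_eq_square algebra_simps)
lemma qnormsq_qconj: "qnormsq (qconj p) = qnormsq p" by (simp add: qconj_def qnormsq_def)
lemma qnormsq_R: "qnormsq (R c) = c^2" by (simp add: qnormsq_def R_def)
lemma qnormsq_mult: "qnormsq (p * q) = qnormsq p * qnormsq q"
proof -
  have "R (qnormsq (p*q)) = (p*q) * qconj (p*q)" by (rule mult_qconj[symmetric])
  also have "\<dots> = p * (q * qconj q) * qconj p" by (simp add: qconj_mult mult.assoc)
  also have "\<dots> = p * (R (qnormsq q) * qconj p)" by (simp add: mult_qconj mult.assoc)
  also have "\<dots> = p * (qconj p * R (qnormsq q))" by (metis R_comm)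
  also have "\<dots> = R (qnormsq p) * R (qnormsq q)" by (simp add: mult.assoc[symmetric] mult_qconj)
  also have "\<dots> = R (qnormsq p * qnormsq q)" by (rule R_mult[symmetric])
  finally show ?thesis by (simp add: R_inj)
qed


lemma hinner3: "hinner y z = qconj (y$1) * z$1 + qconj (y$2) * z$2 + qconj (y$3) * z$3"
  by (simp add: hinner_def sum_3)
lemma hnormsq3: "hnormsq y = qnormsq (y$1) + qnormsq (y$2) + qnormsq (y$3)"
  by (simp add: hnormsq_def sum_3)
lemma hshift_nth: "hshift z $ 1 = z$2" "hshift z $ 2 = z$3" "hshift z $ 3 = z$1"
  by (simp_all add: hshift_def)
lemma hshift3: "hshift (hshift (hshift z)) = z"
  unfolding vec_eq_iff
proof
  fix k :: 3 show "hshift (hshift (hshift z)) $ k = z $ k"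
    using exhaust_3[of k] by (auto simp: hshift_nth)
qed
lemma hinner_shift: "hinner (hshift a) (hshift b) = hinner a b"
  by (simp add: hinner3 hshift_nth add_ac)
lemma hnormsq_shift: "hnormsq (hshift a) = hnormsq a"
  by (simp add: hnormsq3 hshift_nth add_ac)
lemma hip2_shift: "hip2 (hshift a) (hshift b) = hip2 a b"
  by (simp add: hip2_def hinner_shift)
lemma hinner_swap: "hinner z y = qconj (hinner y z)"
  by (simp add: hinner_def qconj_sum qconj_mult qconj_qconj)
lemma hip2_sym: "hip2 z y = hip2 y z"
  unfolding hip2_def by (metis hinner_swap qnormsq_qconj)
lemma hinner_self: "hinner y y = R (hnormsq y)"
  by (simp add: hinner_def hnormsq_def qconj_mult_self R_sum)
lemma hip2_self: "hip2 y y = (hnormsq y)^2"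
  by (simp add: hip2_def hinner_self qnormsq_R)

lemma hip2_expand: "hip2 y z = qr (\<Sum>a\<in>UNIV. \<Sum>b\<in>UNIV. qconj (y$a) * (z$a * qconj (z$b)) * y$b)"
proof -
  have "R (hip2 y z) = hinner y z * qconj (hinner y z)"
    by (simp add: hip2_def mult_qconj)
  also have "\<dots> = (\<Sum>a\<in>UNIV. qconj (y$a) * z$a) * (\<Sum>b\<in>UNIV. qconj (z$b) * y$b)"
    by (simp add: hinner_def qconj_sum qconj_mult qconj_qconj)
  also have "\<dots> = (\<Sum>a\<in>UNIV. \<Sum>b\<in>UNIV. qconj (y$a) * (z$a * qconj (z$b)) * y$b)"
    by (simp add: sum_product mult.assoc)
  finally show ?thesis by (metis qr_R)
qed

definition Q :: "hvec \<Rightarrow> 3 \<Rightarrow> 3 \<Rightarrow> quat" where "Q z a b = z$a * qconj (z$b)"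
definition T :: "hvec \<Rightarrow> quat" where "T z = Q z 1 2 + Q z 2 3 + Q z 3 1"

lemma symQ: "Q z a b + Q (hshift z) a b + Q (hshift (hshift z)) a b =
  (if a = b then R (hnormsq z) else if (a=1\<and>b=2 \<or> a=2\<and>b=3 \<or> a=3\<and>b=1) then T z else qconj (T z))"
proof -
  have D: "R (hnormsq z) = Q z 1 1 + Q z 2 2 + Q z 3 3"
    by (simp add: hnormsq3 R_add Q_def mult_qconj)
  show ?thesis
    using exhaust_3[of a] exhaust_3[of b]
    by (auto simp: D T_def Q_def hshift_nth qconj_add qconj_mult qconj_qconj add_ac)
qed

lemma pull: "(\<Sum>i\<in>I. R (w i) * (\<Sum>a\<in>UNIV. \<Sum>b\<in>UNIV. qconj (y$a) * q i a b * y$b))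
   = (\<Sum>a\<in>UNIV. \<Sum>b\<in>UNIV. qconj (y$a) * (\<Sum>i\<in>I. R (w i) * q i a b) * y$b)"
proof -
  have "R c * (p * q * r) = p * (R c * q) * r" for c p q r
    by (metis R_comm mult.assoc)
  then show ?thesis
    by (simp add: sum_distrib_left sum_distrib_right sum.swap[of _ I])
qed


lemma split3: fixes m :: nat shows "(\<Sum>j=1..3*m. f j) = (\<Sum>i=1..m. f i + f (m+i) + f (2*m+i))"
proof -
  have e: "{1..3*m} = {1..m} \<union> ({m+1..2*m} \<union> {2*m+1..3*m})" by auto
  have "(\<Sum>j=1..3*m. f j) = sum f {1..m} + (sum f {m+1..2*m} + sum f {2*m+1..3*m})"
  proof -
    have d1: "{1..m} \<inter> ({m+1..2*m} \<union> {2*m+1..3*m}) = {}" by auto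
    have d2: "{m+1..2*m} \<inter> {2*m+1..3*m} = {}" by auto
    show ?thesis unfolding e using d1 d2 by (simp add: sum.union_disjoint)
  qed
  also have "sum f {m+1..2*m} = (\<Sum>i=1..m. f (m+i))"
    by (rule sum.reindex_bij_witness[of _ "\<lambda>i. m+i" "\<lambda>j. j-m"]) auto
  also have "sum f {2*m+1..3*m} = (\<Sum>i=1..m. f (2*m+i))"
    by (rule sum.reindex_bij_witness[of _ "\<lambda>i. 2*m+i" "\<lambda>j. j-2*m"]) auto
  finally show ?thesis by (simp add: sum.distrib add.assoc)
qed

lemma hip2_funpow: "hip2 ((hshift^^s) a) ((hshift^^s) b) = hip2 a b"
  by (induction s) (simp_all add: hip2_shift)


lemma line_same: assumes "hnormsq a = 1" "hnormsq b = 1" "hline a = hline b"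
  shows "hip2 a b = 1"
proof -
  have "a = (\<chi> k. a$k * 1)" by (simp add: vec_eq_iff)
  hence "a \<in> hline a" unfolding hline_def by blast
  then obtain q where q: "a = (\<chi> k. b $ k * q)" using assms(3) unfolding hline_def by auto
  have "hinner b a = (\<Sum>k\<in>UNIV. qconj (b$k) * b$k) * q"
    by (simp add: q hinner_def sum_distrib_right mult.assoc)
  also have "\<dots> = q" by (simp add: qconj_mult_self R_sum[symmetric] hnormsq_def[symmetric] assms R_1)
  finally have h: "hinner b a = q" .
  have "hnormsq a = (\<Sum>k\<in>UNIV. qnormsq (b$k)) * qnormsq q"
    by (simp add: q hnormsq_def qnormsq_mult sum_distrib_right)
  then have "qnormsq q = 1" using assms by (simp add: hnormsq_def)
  then have "hip2 b a = 1" unfolding hip2_def h .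
  then show ?thesis using hip2_sym by metis
qed



lemma three_ne: "(1::3) \<noteq> 2" "(2::3) \<noteq> 3" "(1::3) \<noteq> 3" by simp_all

lemma hnormsq_funpow: "hnormsq ((hshift^^s) a) = hnormsq a"
  by (induction s) (simp_all add: hnormsq_shift)

lemma qconj_RT: "qconj (R c * t) = R c * qconj t"
  by (simp add: qconj_mult qconj_R) (metis R_comm)

theorem proposition4p6:
  fixes m :: nat and x :: "nat \<Rightarrow> hvec" and w :: "nat \<Rightarrow> real"
  assumes m: "m \<ge> 1"
    and shift: "\<forall>i\<in>{1..2*m}. x (m + i) = hshift (x i)"
    and wshift: "\<forall>i\<in>{1..2*m}. w (m + i) = w i"
    and unit: "\<forall>i\<in>{1..m}. hnormsq (x i) = 1"
    and equi: "\<exists>c. \<forall>i\<in>{1..m}. \<forall>j.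
                 (j = i + m \<or> (i < j \<and> j \<le> m) \<or> (i + m < j \<and> j \<le> 2*m)
                   \<or> (i + 2*m < j \<and> j \<le> 3*m)) \<longrightarrow> hip2 (x i) (x j) = c"
    and frame11: "(\<Sum>i=1..3*m. qscale (w i) (outer_entry (x i) 1 1)) = 1"
    and frame12: "(\<Sum>i=1..3*m. qscale (w i) (outer_entry (x i) 1 2)) = 0"
  shows "(\<forall>i\<in>{1..3*m}. w i = 1 / real m) \<and> tight_simplex (3*m) x"
proof -
  obtain c where c: "\<forall>i\<in>{1..m}. \<forall>j.
                 (j = i + m \<or> (i < j \<and> j \<le> m) \<or> (i + m < j \<and> j \<le> 2*m)
                   \<or> (i + 2*m < j \<and> j \<le> 3*m)) \<longrightarrow> hip2 (x i) (x j) = c"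
    using equi by blast
  have x1: "x (m+i) = hshift (x i)" if "i \<in> {1..m}" for i using shift that by auto
  have x2: "x (2*m+i) = hshift (hshift (x i))" if "i \<in> {1..m}" for i
  proof -
    have "x (m + (m+i)) = hshift (x (m+i))" using shift that by auto
    thus ?thesis using x1[OF that] by (simp add: mult_2 add.assoc)
  qed
  have w1: "w (m+i) = w i" if "i \<in> {1..m}" for i using wshift that by auto
  have w2: "w (2*m+i) = w i" if "i \<in> {1..m}" for i
  proof -
    have "w (m + (m+i)) = w (m+i)" using wshift that by auto
    thus ?thesis using w1[OF that] by (simp add: mult_2 add.assoc)
  qed
  define M where "M a b = (\<Sum>i=1..m. R (w i) * (Q (x i) a b + Q (hshift (x i)) a b
      + Q (hshift (hshift (x i))) a b))" for a b
  have Mframe: "(\<Sum>j=1..3*m. qscale (w j) (outer_entry (x j) a b)) = M a b" for a b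
    unfolding split3 M_def
    by (rule sum.cong) (auto simp: x1 x2 w1 w2 qscale_R outer_entry_def Q_def distrib_left)
  have Msym: "M a b = (\<Sum>i=1..m. R (w i) * (if a = b then R (hnormsq (x i))
     else if (a=1\<and>b=2 \<or> a=2\<and>b=3 \<or> a=3\<and>b=1) then T (x i) else qconj (T (x i))))" for a b
    unfolding M_def symQ ..
  have MD: "M a a = R (\<Sum>i=1..m. w i)" for a
    unfolding Msym R_sum by (rule sum.cong) (simp_all add: unit R_1)
  have Wm: "(\<Sum>i=1..m. w i) = 1"
    using frame11 Mframe[of 1 1] MD[of 1] by (metis R_1 R_inj)
  have MT: "(\<Sum>i=1..m. R (w i) * T (x i)) = 0"
    using frame12 Mframe[of 1 2] Msym[of 1 2] by (simp add: three_ne)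
  have MI: "M a b = (if a = b then 1 else 0)" for a b
  proof (cases "a = b")
    case True then show ?thesis using MD Wm R_1 by simp
  next
    case False
    show ?thesis
    proof (cases "a=1\<and>b=2 \<or> a=2\<and>b=3 \<or> a=3\<and>b=1")
      case True then show ?thesis using False MT by (simp add: Msym)
    next
      case F2: False
      have "M a b = (\<Sum>i=1..m. R (w i) * qconj (T (x i)))" by (simp only: Msym False F2 if_False)
      also have "\<dots> = qconj (\<Sum>i=1..m. R (w i) * T (x i))" by (simp add: qconj_sum qconj_RT)
      finally show ?thesis using MT False by (simp add: qconj_0)
    qed
  qed
  have key: "(\<Sum>j=1..3*m. w j * hip2 y (x j)) = hnormsq y" for y
  proof -
    let ?G = "\<lambda>i a b. Q (x i) a b + Q (hshift (x i)) a b + Q (hshift (hshift (x i))) a b"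
    have e1: "hip2 y z1 + hip2 y z2 + hip2 y z3 = qr (\<Sum>a\<in>UNIV. \<Sum>b\<in>UNIV.
        qconj (y$a) * (Q z1 a b + Q z2 a b + Q z3 a b) * y$b)" for z1 z2 z3
      by (simp add: hip2_expand Q_def qr_sum qr_add sum.distrib distrib_left distrib_right)
    have "(\<Sum>j=1..3*m. w j * hip2 y (x j)) = (\<Sum>i=1..m. w i * (hip2 y (x i)
        + hip2 y (hshift (x i)) + hip2 y (hshift (hshift (x i)))))"
      unfolding split3 by (rule sum.cong) (simp_all add: x1 x2 w1 w2 distrib_left)
    also have "\<dots> = (\<Sum>i=1..m. qr (R (w i) * (\<Sum>a\<in>UNIV. \<Sum>b\<in>UNIV.
        qconj (y$a) * ?G i a b * y$b)))"
      by (simp add: e1 qr_Rmult)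
    also have "\<dots> = qr (\<Sum>i=1..m. R (w i) * (\<Sum>a\<in>UNIV. \<Sum>b\<in>UNIV.
        qconj (y$a) * ?G i a b * y$b))"
      by (simp add: qr_sum)
    also have "\<dots> = qr (\<Sum>a\<in>UNIV. \<Sum>b\<in>UNIV. qconj (y$a) * M a b * y$b)"
      unfolding M_def by (simp only: pull[where w=w and I="{1..m}" and y=y and q="?G"])
    also have "\<dots> = qr (\<Sum>a\<in>UNIV. qconj (y$a) * y$a)"
    proof -
      have "qconj (y$a) * M a b * y$b = (if a = b then qconj (y$a) * y$b else 0)" for a b
        by (simp add: MI)
      then show ?thesis by simp
    qed
    also have "\<dots> = hnormsq y"
      by (simp add: qconj_mult_self qr_sum qr_R hnormsq_def)
    finally show ?thesis .
  qed
  have cc: "hip2 (x i) (x j) = c" if "i \<in> {1..m}" "j = i + m \<or> (i < j \<and> j \<le> m) \<or> (i + m < j \<and> j \<le> 2*m)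
                   \<or> (i + 2*m < j \<and> j \<le> 3*m)" for i j
    using c that by blast
  have B: "hip2 (x i) ((hshift^^d) (x i')) = c"
    if i: "i \<in> {1..m}" and i': "i' \<in> {1..m}" and d: "d < 3" and d0: "d = 0 \<Longrightarrow> i \<noteq> i'" for i i' d
  proof -
    consider "d = 0" | "d = 1" | "d = 2" using d by linarith
    then show ?thesis
    proof cases
      case 1
      then have "i < i' \<or> i' < i" using d0 by auto
      then show ?thesis
      proof
        assume "i < i'" then show ?thesis using 1 i i' by (simp add: cc)
      next
        assume "i' < i" then have "hip2 (x i') (x i) = c" using i i' by (simp add: cc)
        then show ?thesis using 1 hip2_sym[of "x i'" "x i"] by simp
      qed
    next
      case 2
      then have hd: "(hshift^^d) (x i') = hshift (x i')" by simp
      consider "i = i'" | "i < i'" | "i' < i" by linarith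
      then show ?thesis
      proof cases
        case 1 then show ?thesis unfolding hd using x1[OF i] cc[OF i, of "i+m"] by (simp add: add.commute)
      next
        case 2 then show ?thesis unfolding hd using x1[OF i'] cc[OF i, of "m+i'"] i' by simp
      next
        case 3
        have "hip2 (x i) (hshift (x i')) = hip2 (hshift (hshift (x i))) (hshift (hshift (hshift (x i'))))"
          by (simp add: hip2_shift)
        also have "\<dots> = hip2 (x i') (x (2*m+i))" by (simp add: hshift3 x2[OF i] hip2_sym)
        also have "\<dots> = c" using cc[OF i', of "2*m+i"] 3 i by simp
        finally show ?thesis unfolding hd .
      qed
    next
      case 3
      then have hd: "(hshift^^d) (x i') = hshift (hshift (x i'))" by (simp add: numeral_2_eq_2)
      consider "i = i'" | "i < i'" | "i' < i" by linarith
      then show ?thesis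
      proof cases
        case 1
        have "hip2 (x i) (hshift (hshift (x i))) = hip2 (hshift (x i)) (hshift (hshift (hshift (x i))))"
          by (simp add: hip2_shift)
        also have "\<dots> = hip2 (x i) (x (i+m))" using x1[OF i] hip2_sym[of "hshift (x i)" "x i"] by (simp add: hshift3 add.commute)
        also have "\<dots> = c" using cc[OF i, of "i+m"] by simp
        finally show ?thesis unfolding hd using 1 by simp
      next
        case 2 then show ?thesis unfolding hd using x2[OF i'] cc[OF i, of "2*m+i'"] i' by simp
      next
        case 3
        have "hip2 (x i) (hshift (hshift (x i'))) = hip2 (hshift (x i)) (hshift (hshift (hshift (x i'))))"
          by (simp add: hip2_shift)
        also have "\<dots> = hip2 (x i') (x (m+i))" by (simp add: hshift3 x1[OF i] hip2_sym)
        also have "\<dots> = c" using cc[OF i', of "m+i"] 3 i by simp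
        finally show ?thesis unfolding hd .
      qed
    qed
  qed
  have rep: "\<exists>i s. i \<in> {1..m} \<and> s < 3 \<and> x k = (hshift^^s) (x i) \<and> w k = w i \<and> k = s*m+i"
    if k: "k \<in> {1..3*m}" for k
  proof -
    consider "k \<le> m" | "m < k \<and> k \<le> 2*m" | "2*m < k" by linarith
    then show ?thesis
    proof cases
      case 1 then show ?thesis using k by (intro exI[of _ k] exI[of _ 0]) auto
    next
      case 2
      then obtain i where i: "k = m + i" "i \<in> {1..m}" by (intro that[of "k-m"]) auto
      then show ?thesis using x1[OF i(2)] w1[OF i(2)] by (intro exI[of _ i] exI[of _ 1]) auto
    next
      case 3
      then obtain i where i: "k = 2*m + i" "i \<in> {1..m}" using k by (intro that[of "k-2*m"]) auto
      then show ?thesis using x2[OF i(2)] w2[OF i(2)]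
        by (intro exI[of _ i] exI[of _ 2]) (auto simp: numeral_2_eq_2)
    qed
  qed
  have unit_all: "hnormsq (x k) = 1" if "k \<in> {1..3*m}" for k
    using rep[OF that] unit hnormsq_funpow by metis
  have pairs: "hip2 (x k) (x j) = c" if k: "k \<in> {1..3*m}" and j: "j \<in> {1..3*m}" and kj: "k \<noteq> j" for k j
  proof -
    obtain i s where iss: "i \<in> {1..m}" "s < 3" "x k = (hshift^^s) (x i)" "k = s*m+i"
      using rep[OF k] by blast
    obtain i' t where it: "i' \<in> {1..m}" "t < 3" "x j = (hshift^^t) (x i')" "j = t*m+i'"
      using rep[OF j] by blast
    show ?thesis
    proof (cases "s \<le> t")
      case True
      have "hip2 (x k) (x j) = hip2 ((hshift^^s) (x i)) ((hshift^^s) ((hshift^^(t-s)) (x i')))"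
      proof -
        have "(hshift^^s) ((hshift^^(t-s)) z) = (hshift^^t) z" for z
          using True by (metis funpow_add comp_apply le_add_diff_inverse)
        then show ?thesis using iss it by simp
      qed
      also have "\<dots> = hip2 (x i) ((hshift^^(t-s)) (x i'))" by (rule hip2_funpow)
      also have "\<dots> = c" using B[OF iss(1) it(1), of "t-s"] it(2) kj iss(4) it(4) True by (metis diff_le_self le_less_trans le_antisym diff_is_0_eq)
      finally show ?thesis .
    next
      case False
      have "hip2 (x k) (x j) = hip2 ((hshift^^t) ((hshift^^(s-t)) (x i))) ((hshift^^t) (x i'))"
      proof -
        have "(hshift^^t) ((hshift^^(s-t)) z) = (hshift^^s) z" for z
          using False by (metis funpow_add comp_apply le_add_diff_inverse nat_le_linear)
        then show ?thesis using iss it by simp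
      qed
      also have "\<dots> = hip2 (x i') ((hshift^^(s-t)) (x i))" by (metis hip2_funpow hip2_sym)
      also have "\<dots> = c" using B[OF it(1) iss(1), of "s-t"] iss(2) False by auto
      finally show ?thesis .
    qed
  qed
  have W3: "(\<Sum>j=1..3*m. w j) = 3"
  proof -
    have "(\<Sum>j=1..3*m. w j) = (\<Sum>i=1..m. 3 * w i)"
      unfolding split3 by (rule sum.cong) (simp_all add: w1 w2)
    also have "\<dots> = 3" using Wm by (simp add: sum_distrib_left[symmetric])
    finally show ?thesis .
  qed
  have eqk: "w k + c * (3 - w k) = 1" if k: "k \<in> {1..3*m}" for k
  proof -
    have "1 = (\<Sum>j=1..3*m. w j * hip2 (x k) (x j))" using key[of "x k"] unit_all[OF k] by simp
    also have "\<dots> = w k * hip2 (x k) (x k) + (\<Sum>j\<in>{1..3*m}-{k}. w j * hip2 (x k) (x j))"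
      using k by (simp add: sum.remove)
    also have "(\<Sum>j\<in>{1..3*m}-{k}. w j * hip2 (x k) (x j)) = (\<Sum>j\<in>{1..3*m}-{k}. c * w j)"
      using pairs[OF k] by (intro sum.cong) auto
    also have "\<dots> = c * ((\<Sum>j=1..3*m. w j) - w k)"
      using k by (simp add: sum_distrib_left[symmetric] sum_diff1)
    finally show ?thesis using W3 unit_all[OF k] by (simp add: hip2_self)
  qed
  have c1: "c \<noteq> 1" using eqk[of 1] m by auto
  have wk: "w k = (1 - 3*c) / (1 - c)" if "k \<in> {1..3*m}" for k
    using eqk[OF that] c1 by (simp add: field_simps)
  have mpos: "real m > 0" using m by simp
  have "real m * ((1 - 3*c) / (1 - c)) = 1"
  proof -
    have "(\<Sum>i=1..m. w i) = (\<Sum>i=1..m. (1 - 3*c) / (1 - c))"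
      by (rule sum.cong) (auto intro: wk)
    also have "\<dots> = real m * ((1 - 3*c) / (1 - c))" by simp
    finally show ?thesis using Wm by metis
  qed
  then have om: "(1 - 3*c) / (1 - c) = 1 / real m" using mpos by (simp add: field_simps)
  have wall: "\<forall>i\<in>{1..3*m}. w i = 1 / real m" using wk om by simp
  have "1 / real m + c * (3 - 1 / real m) = 1" using eqk[of 1] wall m by auto
  then have "c * (3 * real m - 1) = real m - 1" using mpos by (simp add: field_simps)
  then have cval: "c = (real m - 1) / (3 * real m - 1)" using mpos by (simp add: field_simps)
  have clt: "c < 1" unfolding cval using mpos by (simp add: field_simps)
  have cval2: "c = (real (3*m) - 3) / (3 * (real (3*m) - 1))"
    unfolding cval using mpos by (simp add: field_simps)
  have "tight_simplex (3*m) x"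
    unfolding tight_simplex_def
  proof (intro conjI ballI impI)
    fix i assume "i \<in> {1..3*m}" then show "hnormsq (x i) = 1" by (rule unit_all)
  next
    fix i j assume ij: "i \<in> {1..3*m}" "j \<in> {1..3*m}" "i \<noteq> j"
    show "hline (x i) \<noteq> hline (x j)"
    proof
      assume "hline (x i) = hline (x j)"
      then have "hip2 (x i) (x j) = 1" using line_same unit_all ij by blast
      then show False using pairs[OF ij] clt by simp
    qed
  next
    fix i j assume ij: "i \<in> {1..3*m}" "j \<in> {1..3*m}" "i \<noteq> j"
    show "hip2 (x i) (x j) = (real (3*m) - 3) / (3 * (real (3*m) - 1))"
      using pairs[OF ij] cval2 by simp
  qed
  with wall show ?thesis by blast
qed
end
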